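(* $E^{ce}_{\max}$ is not binarily reducible to $E^{ce}_{\min}$ (i.e. $E^{ce}_{\max}\not\leq_c^2E^{ce}_{\min}$). However, $E^{ce}_{\min}$ is finitarily reducible to $E^{ce}_{\max}$ (i.e. $E^{ce}_{\min}\leq_c^{<\omega}E^{ce}_{\max}$).
   Context: $W_e$ is the $e$-th c.e. set. $i\,E^{ce}_{\min}\,j\iff\min(W_i)=\min(W_j)$ and $i\,E^{ce}_{\max}\,j\iff\max(W_i)=\max(W_j)$, where the empty set has minimum $+\infty$ and maximum $-\infty$, and all infinite sets have maximum $+\infty$. For equivalence relations $E,F$ on $\omega$ and $n\ge1$, $E\leq_c^nF$ means there is a total computable function mapping each $(x_0,\dots,x_{n-1})\in\omega^n$ to $(y_0,\dots,y_{n-1})\in\omega^n$ with $x_i\,E\,x_j\iff y_i\,F\,y_j$ for all $i<j<n$; $E\leq_c^{<\omega}F$ means such functions exist uniformly in $n$ (one computable function taking $n$ and an $n$-tuple). *)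

theory Defs
  imports Main "HOL-Library.Nat_Bijection" "HOL-Library.Extended_Real"
begin

text \<open>A concrete acceptable-style Goedel numbering of the unary partial recursive
functions (Kleene-style basis with Cantor pairing).  Index e is decoded by
e mod 8 (the kind of the function) and prod_decode (e div 8) (the sub-indices):
  0: constant zero, 1: successor, 2: first projection of a pair, 3: second projection,
  4: composition (a after b), 5: pairing x maps to (a x, b x),
  6: primitive recursion on the second pair component, 7: unbounded minimisation.
phi_rel e x y means that the e-th partial recursive function maps x to y.\<close>

inductive phi_rel :: "nat \<Rightarrow> nat \<Rightarrow> nat \<Rightarrow> bool" where
  pr_zero: "e mod 8 = 0 \<Longrightarrow> phi_rel e x 0"
| pr_succ: "e mod 8 = 1 \<Longrightarrow> phi_rel e x (Suc x)"
| pr_fst: "e mod 8 = 2 \<Longrightarrow> phi_rel e x (fst (prod_decode x))"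
| pr_snd: "e mod 8 = 3 \<Longrightarrow> phi_rel e x (snd (prod_decode x))"
| pr_comp: "e mod 8 = 4 \<Longrightarrow> prod_decode (e div 8) = (a, b) \<Longrightarrow>
            phi_rel b x y \<Longrightarrow> phi_rel a y z \<Longrightarrow> phi_rel e x z"
| pr_pair: "e mod 8 = 5 \<Longrightarrow> prod_decode (e div 8) = (a, b) \<Longrightarrow>
            phi_rel a x y \<Longrightarrow> phi_rel b x z \<Longrightarrow> phi_rel e x (prod_encode (y, z))"
| pr_rec0: "e mod 8 = 6 \<Longrightarrow> prod_decode (e div 8) = (a, b) \<Longrightarrow>
            prod_decode x = (u, 0) \<Longrightarrow> phi_rel a u y \<Longrightarrow> phi_rel e x y"
| pr_recS: "e mod 8 = 6 \<Longrightarrow> prod_decode (e div 8) = (a, b) \<Longrightarrow>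
            prod_decode x = (u, Suc n) \<Longrightarrow> phi_rel e (prod_encode (u, n)) w \<Longrightarrow>
            phi_rel b (prod_encode (u, prod_encode (n, w))) y \<Longrightarrow> phi_rel e x y"
| pr_mu: "e mod 8 = 7 \<Longrightarrow> phi_rel (e div 8) (prod_encode (x, n)) 0 \<Longrightarrow>
          (\<forall>m<n. \<exists>k. phi_rel (e div 8) (prod_encode (x, m)) (Suc k)) \<Longrightarrow> phi_rel e x n"

definition W :: "nat \<Rightarrow> nat set" where
  "W e = {x. \<exists>y. phi_rel e x y}"

definition minW :: "nat \<Rightarrow> ereal" where
  "minW e = (if W e = {} then \<infinity> else ereal (real (Inf (W e))))"

definition maxW :: "nat \<Rightarrow> ereal" where
  "maxW e = (if W e = {} then -\<infinity> else if infinite (W e) then \<infinity>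
             else ereal (real (Max (W e))))"

definition E_min :: "nat \<Rightarrow> nat \<Rightarrow> bool" where
  "E_min i j \<longleftrightarrow> minW i = minW j"

definition E_max :: "nat \<Rightarrow> nat \<Rightarrow> bool" where
  "E_max i j \<longleftrightarrow> maxW i = maxW j"

definition reduces_n :: "nat \<Rightarrow> (nat \<Rightarrow> nat \<Rightarrow> bool) \<Rightarrow> (nat \<Rightarrow> nat \<Rightarrow> bool) \<Rightarrow> bool" where
  "reduces_n n E F \<longleftrightarrow> (\<exists>f :: nat list \<Rightarrow> nat list.
     (\<exists>e. \<forall>xs. length xs = n \<longrightarrow> phi_rel e (list_encode xs) (list_encode (f xs))) \<and>
     (\<forall>xs. length xs = n \<longrightarrow> length (f xs) = n \<and>
        (\<forall>i j. i < j \<and> j < n \<longrightarrow> (E (xs ! i) (xs ! j) \<longleftrightarrow> F (f xs ! i) (f xs ! j)))))"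

text \<open>Finitary reducibility: one computable function, uniform in n \<ge> 1
(n is recoverable from the code of the list).\<close>
definition reduces_fin :: "(nat \<Rightarrow> nat \<Rightarrow> bool) \<Rightarrow> (nat \<Rightarrow> nat \<Rightarrow> bool) \<Rightarrow> bool" where
  "reduces_fin E F \<longleftrightarrow> (\<exists>f :: nat list \<Rightarrow> nat list.
     (\<exists>e. \<forall>xs. xs \<noteq> [] \<longrightarrow> phi_rel e (list_encode xs) (list_encode (f xs))) \<and>
     (\<forall>xs. xs \<noteq> [] \<longrightarrow> length (f xs) = length xs \<and>
        (\<forall>i j. i < j \<and> j < length xs \<longrightarrow> (E (xs ! i) (xs ! j) \<longleftrightarrow> F (f xs ! i) (f xs ! j)))))"

end

theory Submission
  imports Defs
begin

definition pe :: "nat \<Rightarrow> nat \<Rightarrow> nat" where "pe a b = prod_encode (a, b)"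
definition p1 :: "nat \<Rightarrow> nat" where "p1 x = fst (prod_decode x)"
definition p2 :: "nat \<Rightarrow> nat" where "p2 x = snd (prod_decode x)"

lemma p1_pe[simp]: "p1 (pe a b) = a" by (simp add: p1_def pe_def)
lemma p2_pe[simp]: "p2 (pe a b) = b" by (simp add: p2_def pe_def)
lemma pe_eq[simp]: "pe a b = pe c d \<longleftrightarrow> a = c \<and> b = d" by (simp add: pe_def)
lemma pe_p[simp]: "pe (p1 x) (p2 x) = x" by (simp add: pe_def p1_def p2_def)
lemma decode_pe[simp]: "prod_decode (pe a b) = (a, b)" by (simp add: pe_def)
lemma pe_ge1: "a \<le> pe a b" by (simp add: pe_def le_prod_encode_1)
lemma pe_ge2: "b \<le> pe a b" by (simp add: pe_def le_prod_encode_2)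

datatype pr = Z | Sc | Fs | Sn | Cmp pr pr | Pr pr pr | Rc pr pr

fun rf :: "(nat \<Rightarrow> nat) \<Rightarrow> (nat \<Rightarrow> nat) \<Rightarrow> nat \<Rightarrow> nat \<Rightarrow> nat" where
  "rf a b u 0 = a u"
| "rf a b u (Suc n) = b (pe u (pe n (rf a b u n)))"

fun sem :: "pr \<Rightarrow> nat \<Rightarrow> nat" where
  "sem Z x = 0"
| "sem Sc x = Suc x"
| "sem Fs x = p1 x"
| "sem Sn x = p2 x"
| "sem (Cmp f g) x = sem f (sem g x)"
| "sem (Pr f g) x = pe (sem f x) (sem g x)"
| "sem (Rc f g) x = rf (sem f) (sem g) (p1 x) (p2 x)"

fun cd :: "pr \<Rightarrow> nat" where
  "cd Z = 0" | "cd Sc = 1" | "cd Fs = 2" | "cd Sn = 3"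
| "cd (Cmp f g) = 4 + 8 * pe (cd f) (cd g)"
| "cd (Pr f g) = 5 + 8 * pe (cd f) (cd g)"
| "cd (Rc f g) = 6 + 8 * pe (cd f) (cd g)"

lemma phi_comp: "phi_rel b x y \<Longrightarrow> phi_rel a y z \<Longrightarrow> phi_rel (4 + 8 * pe a b) x z"
  by (rule pr_comp[where a=a and b=b]) (auto simp: pe_def)
lemma phi_pair: "phi_rel a x y \<Longrightarrow> phi_rel b x z \<Longrightarrow> phi_rel (5 + 8 * pe a b) x (pe y z)"
  unfolding pe_def[of y z] by (rule pr_pair[where a=a and b=b]) (auto simp: pe_def)

lemma cd_correct: "phi_rel (cd t) x (sem t x)"
proof (induction t arbitrary: x)
  case Z then show ?case by (auto intro: pr_zero)
next case Sc then show ?case by (auto intro: pr_succ)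
next case Fs then show ?case by (auto intro!: pr_fst simp: p1_def)
next case Sn then show ?case by (auto intro!: pr_snd simp: p2_def)
next case (Cmp f g) then show ?case by (auto intro: phi_comp)
next case (Pr f g) then show ?case by (auto intro: phi_pair)
next
  case (Rc f g)
  have e8: "cd (Rc f g) mod 8 = 6" "prod_decode (cd (Rc f g) div 8) = (cd f, cd g)"
    by (simp_all add: pe_def)
  have "phi_rel (cd (Rc f g)) (pe u n) (rf (sem f) (sem g) u n)" for u n
  proof (induction n)
    case 0 show ?case
      by (rule pr_rec0[OF e8, of _ u]) (simp_all add: Rc.IH(1))
  next
    case (Suc n) show ?case
      by (rule pr_recS[OF e8, of _ u n, OF _ Suc[unfolded pe_def]]) (simp_all add: Rc.IH(2) pe_def)
  qed
  from this[of "p1 x" "p2 x"] show ?case by simp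
qed

named_theorems pi

definition prim :: "(nat \<Rightarrow> nat) \<Rightarrow> bool" where "prim f \<longleftrightarrow> (\<exists>t. sem t = f)"

lemma prim_idx: "prim f \<Longrightarrow> \<exists>e. \<forall>x. phi_rel e x (f x)"
  unfolding prim_def using cd_correct by blast

lemma prim_id[pi]: "prim (\<lambda>x. x)"
  unfolding prim_def by (rule exI[of _ "Pr Fs Sn"]) auto

fun constT :: "nat \<Rightarrow> pr" where "constT 0 = Z" | "constT (Suc n) = Cmp Sc (constT n)"
lemma sem_constT[simp]: "sem (constT n) x = n" by (induction n) auto

lemma prim_const[pi]: "prim (\<lambda>x. c)"
  unfolding prim_def by (rule exI[of _ "constT c"]) auto

lemma prim_Suc[pi]: "prim f \<Longrightarrow> prim (\<lambda>x. Suc (f x))"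
proof -
  assume "prim f" then obtain t where "sem t = f" unfolding prim_def by blast
  then have "sem (Cmp Sc t) = (\<lambda>x. Suc (f x))" by auto
  then show ?thesis unfolding prim_def by blast
qed
lemma prim_p1[pi]: "prim f \<Longrightarrow> prim (\<lambda>x. p1 (f x))"
proof -
  assume "prim f" then obtain t where "sem t = f" unfolding prim_def by blast
  then have "sem (Cmp Fs t) = (\<lambda>x. p1 (f x))" by auto
  then show ?thesis unfolding prim_def by blast
qed
lemma prim_p2[pi]: "prim f \<Longrightarrow> prim (\<lambda>x. p2 (f x))"
proof -
  assume "prim f" then obtain t where "sem t = f" unfolding prim_def by blast
  then have "sem (Cmp Sn t) = (\<lambda>x. p2 (f x))" by auto
  then show ?thesis unfolding prim_def by blast
qed
lemma prim_pe[pi]: "prim f \<Longrightarrow> prim g \<Longrightarrow> prim (\<lambda>x. pe (f x) (g x))"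
proof -
  assume "prim f" "prim g" then obtain t u where "sem t = f" "sem u = g" unfolding prim_def by blast
  then have "sem (Pr t u) = (\<lambda>x. pe (f x) (g x))" by auto
  then show ?thesis unfolding prim_def by blast
qed
lemma prim_comp: "prim f \<Longrightarrow> prim g \<Longrightarrow> prim (\<lambda>x. f (g x))"
proof -
  assume "prim f" "prim g" then obtain t u where "sem t = f" "sem u = g" unfolding prim_def by blast
  then have "sem (Cmp t u) = (\<lambda>x. f (g x))" by auto
  then show ?thesis unfolding prim_def by blast
qed

lemma rf_rec_nat: "rf a b u n = rec_nat (a u) (\<lambda>k w. b (pe u (pe k w))) n"
  by (induction n) auto

lemma prim_rec[pi]:
  assumes "prim a" "prim (\<lambda>p. b (p1 p) (p1 (p2 p)) (p2 (p2 p)))" "prim n"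
  shows "prim (\<lambda>x. rec_nat (a x) (b x) (n x))"
proof -
  obtain ta tb tn where ta: "sem ta = a" and tb: "sem tb = (\<lambda>p. b (p1 p) (p1 (p2 p)) (p2 (p2 p)))"
    and tn: "sem tn = n" using assms unfolding prim_def by blast
  have "sem (Cmp (Rc ta tb) (Pr (Pr Fs Sn) tn)) x = rec_nat (a x) (b x) (n x)" for x
  proof -
    have "rf a (\<lambda>p. b (p1 p) (p1 (p2 p)) (p2 (p2 p))) x m = rec_nat (a x) (b x) m" for m
      by (induction m) auto
    then show ?thesis using ta tb tn by (simp add: pe_def[symmetric])
  qed
  then show ?thesis unfolding prim_def by blast
qed

lemma prim_pred[pi]: assumes a: "prim f" shows "prim (\<lambda>x. f x - 1)"
proof -
  have "prim (\<lambda>x. rec_nat 0 (\<lambda>k w. k) (f x))" by (intro pi a)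
  moreover have "rec_nat 0 (\<lambda>k w. k) n = n - 1" for n :: nat by (cases n) auto
  ultimately show ?thesis by simp
qed

lemma prim_add[pi]: assumes a: "prim f" "prim g" shows "prim (\<lambda>x. f x + g x)"
proof -
  have "prim (\<lambda>x. rec_nat (f x) (\<lambda>k w. Suc w) (g x))" by (intro pi a prim_comp[OF a(1)] prim_comp[OF a(2)])
  moreover have "rec_nat a (\<lambda>k w. Suc w) n = a + n" for a n :: nat by (induction n) auto
  ultimately show ?thesis by simp
qed

lemma prim_sub[pi]: assumes a: "prim f" "prim g" shows "prim (\<lambda>x. f x - g x)"
proof -
  have "prim (\<lambda>x. rec_nat (f x) (\<lambda>k w. w - 1) (g x))" by (intro pi a prim_comp[OF a(1)] prim_comp[OF a(2)])
  moreover have "rec_nat a (\<lambda>k w. w - 1) n = a - n" for a n :: nat by (induction n) auto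
  ultimately show ?thesis by simp
qed

lemma prim_mult[pi]: assumes a: "prim f" "prim g" shows "prim (\<lambda>x. f x * g x)"
proof -
  have "prim (\<lambda>x. rec_nat 0 (\<lambda>k w. w + f x) (g x))" by (intro pi a prim_comp[OF a(1)] prim_comp[OF a(2)])
  moreover have "rec_nat 0 (\<lambda>k w. w + a) n = a * n" for a n :: nat by (induction n) auto
  ultimately show ?thesis by (simp add: mult.commute)
qed

lemma prim_if0: assumes a: "prim f" "prim g" "prim h" shows "prim (\<lambda>x. if f x = 0 then g x else h x)"
proof -
  have "prim (\<lambda>x. rec_nat (g x) (\<lambda>k w. h x) (f x))" by (intro pi a prim_comp[OF a(1)] prim_comp[OF a(2)] prim_comp[OF a(3)])
  moreover have "rec_nat a (\<lambda>k w. b) n = (if n = 0 then a else b)" for a b n :: nat by (cases n) auto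
  ultimately show ?thesis by simp
qed

lemma prim_ifeq[pi]: "prim f \<Longrightarrow> prim g \<Longrightarrow> prim h \<Longrightarrow> prim k \<Longrightarrow>
   prim (\<lambda>x. if f x = g x then h x else k x)"
proof -
  assume a: "prim f" "prim g" "prim h" "prim k"
  have "prim (\<lambda>x. if (f x - g x) + (g x - f x) = 0 then h x else k x)"
    by (intro prim_if0 prim_add prim_sub a)
  moreover have "((a::nat) - b) + (b - a) = 0 \<longleftrightarrow> a = b" for a b by auto
  ultimately show ?thesis by simp
qed

lemma prim_ifle[pi]: "prim f \<Longrightarrow> prim g \<Longrightarrow> prim h \<Longrightarrow> prim k \<Longrightarrow>
   prim (\<lambda>x. if f x \<le> g x then h x else k x)"
proof -
  assume a: "prim f" "prim g" "prim h" "prim k"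
  have "prim (\<lambda>x. if f x - g x = 0 then h x else k x)"
    by (intro prim_if0 prim_sub a)
  then show ?thesis by simp
qed

lemma prim_ifless[pi]: "prim f \<Longrightarrow> prim g \<Longrightarrow> prim h \<Longrightarrow> prim k \<Longrightarrow>
   prim (\<lambda>x. if f x < g x then h x else k x)"
proof -
  assume a: "prim f" "prim g" "prim h" "prim k"
  have "prim (\<lambda>x. if Suc (f x) - g x = 0 then h x else k x)"
    by (intro prim_if0 prim_sub prim_Suc a)
  then show ?thesis by (simp add: Suc_le_eq[symmetric])
qed

lemma mod8_rec: "rec_nat 0 (\<lambda>k w. if w = 7 then 0 else Suc w) n = n mod 8"
  by (induction n) (auto simp: mod_Suc)

lemma prim_mod8[pi]: "prim f \<Longrightarrow> prim (\<lambda>x. f x mod 8)"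
proof -
  assume a: "prim f"
  have "prim (\<lambda>x. rec_nat 0 (\<lambda>k w. if w = 7 then 0 else Suc w) x)"
    by (intro pi)
  then have "prim (\<lambda>x. x mod 8)" by (simp add: mod8_rec)
  from prim_comp[OF this a] show ?thesis .
qed

lemma div8_rec: "rec_nat 0 (\<lambda>k w. if k mod 8 = 7 then Suc w else w) n = n div 8"
  by (induction n) (auto simp: div_Suc mod_Suc)

lemma prim_div8[pi]: "prim f \<Longrightarrow> prim (\<lambda>x. f x div 8)"
proof -
  assume a: "prim f"
  have "prim (\<lambda>x. rec_nat 0 (\<lambda>k w. if k mod 8 = 7 then Suc w else w) x)"
    by (intro pi)
  then have "prim (\<lambda>x. x div 8)" by (simp add: div8_rec)
  from prim_comp[OF this a] show ?thesis .
qed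

abbreviation Ev :: "nat \<Rightarrow> nat \<Rightarrow> nat \<Rightarrow> nat" where "Ev e x st \<equiv> pe 0 (pe e (pe x st))"
abbreviation Rt :: "nat \<Rightarrow> nat \<Rightarrow> nat" where "Rt v st \<equiv> pe (Suc 0) (pe v st)"
abbreviation cns :: "nat \<Rightarrow> nat \<Rightarrow> nat" where "cns F r \<equiv> Suc (pe F r)"

definition stepE :: "nat \<Rightarrow> nat \<Rightarrow> nat \<Rightarrow> nat" where
"stepE e x st =
 (if e mod 8 = 0 then Rt 0 st
  else if e mod 8 = 1 then Rt (Suc x) st
  else if e mod 8 = 2 then Rt (p1 x) st
  else if e mod 8 = 3 then Rt (p2 x) st
  else if e mod 8 = 4 then Ev (p2 (e div 8)) x (cns (pe 0 (p1 (e div 8))) st)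
  else if e mod 8 = 5 then Ev (p1 (e div 8)) x (cns (pe 1 (pe (p2 (e div 8)) x)) st)
  else if e mod 8 = 6 then (if p2 x = 0 then Ev (p1 (e div 8)) (p1 x) st
        else Ev e (pe (p1 x) (p2 x - 1)) (cns (pe 3 (pe (p2 (e div 8)) (pe (p1 x) (p2 x - 1)))) st))
  else Ev (e div 8) (pe x 0) (cns (pe 4 (pe e (pe x 0))) st))"

definition stepR :: "nat \<Rightarrow> nat \<Rightarrow> nat" where
"stepR v st = (if st = 0 then Rt v 0 else
  if p1 (p1 (st-1)) = 0 then Ev (p2 (p1 (st-1))) v (p2 (st-1))
  else if p1 (p1 (st-1)) = 1 then Ev (p1 (p2 (p1 (st-1)))) (p2 (p2 (p1 (st-1)))) (cns (pe 2 v) (p2 (st-1)))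
  else if p1 (p1 (st-1)) = 2 then Rt (pe (p2 (p1 (st-1))) v) (p2 (st-1))
  else if p1 (p1 (st-1)) = 3 then Ev (p1 (p2 (p1 (st-1)))) (pe (p1 (p2 (p2 (p1 (st-1))))) (pe (p2 (p2 (p2 (p1 (st-1))))) v)) (p2 (st-1))
  else if v = 0 then Rt (p2 (p2 (p2 (p1 (st-1))))) (p2 (st-1))
  else Ev (p1 (p2 (p1 (st-1))) div 8) (pe (p1 (p2 (p2 (p1 (st-1))))) (Suc (p2 (p2 (p2 (p1 (st-1)))))))
        (cns (pe 4 (pe (p1 (p2 (p1 (st-1)))) (pe (p1 (p2 (p2 (p1 (st-1))))) (Suc (p2 (p2 (p2 (p1 (st-1))))))))) (p2 (st-1))))"

definition step :: "nat \<Rightarrow> nat" where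
"step Q = (if p1 Q = 0 then stepE (p1 (p2 Q)) (p1 (p2 (p2 Q))) (p2 (p2 (p2 Q))) else stepR (p1 (p2 Q)) (p2 (p2 Q)))"

lemma step_Ev[simp]: "step (Ev e x st) = stepE e x st" by (simp add: step_def)
lemma step_Rt[simp]: "step (Rt v st) = stepR v st" by (simp add: step_def)

lemma stepR_cns: "stepR v (cns F r) =
  (if p1 F = 0 then Ev (p2 F) v r
  else if p1 F = 1 then Ev (p1 (p2 F)) (p2 (p2 F)) (cns (pe 2 v) r)
  else if p1 F = 2 then Rt (pe (p2 F) v) r
  else if p1 F = 3 then Ev (p1 (p2 F)) (pe (p1 (p2 (p2 F))) (pe (p2 (p2 (p2 F))) v)) r
  else if v = 0 then Rt (p2 (p2 (p2 F))) r
  else Ev (p1 (p2 F) div 8) (pe (p1 (p2 (p2 F))) (Suc (p2 (p2 (p2 F)))))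
        (cns (pe 4 (pe (p1 (p2 F)) (pe (p1 (p2 (p2 F))) (Suc (p2 (p2 (p2 F))))))) r))"
proof -
  have a: "cns F r - 1 = pe F r" by simp
  have b: "(cns F r = 0) = False" by simp
  show ?thesis unfolding stepR_def a b if_False p1_pe p2_pe by (rule refl)
qed

definition run :: "nat \<Rightarrow> nat \<Rightarrow> nat" where "run k Q = (step ^^ k) Q"

lemma run_0[simp]: "run 0 Q = Q" by (simp add: run_def)
lemma run_Suc: "run (Suc k) Q = run k (step Q)" by (simp only: run_def funpow_Suc_right comp_def)
lemma run_add: "run (k1 + k2) Q = run k2 (run k1 Q)" by (simp only: run_def add.commute[of k1 k2] funpow_add comp_def)

lemma decode_p: "prod_decode d = (p1 d, p2 d)" by (simp add: p1_def p2_def)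
lemma decode_eq_pe: "prod_decode x = (u, n) \<longleftrightarrow> x = pe u n"
proof
  assume "prod_decode x = (u, n)"
  then have "prod_encode (prod_decode x) = prod_encode (u, n)" by simp
  then show "x = pe u n" by (simp add: pe_def)
qed simp

definition reach :: "nat \<Rightarrow> nat \<Rightarrow> bool" where "reach A B \<longleftrightarrow> (\<exists>k. run k A = B)"

lemma reach_refl: "reach A A" unfolding reach_def by (rule exI[of _ 0]) simp
lemma reach_step: "step A = B \<Longrightarrow> reach B C \<Longrightarrow> reach A C"
proof -
  assume "step A = B" "reach B C"
  then obtain k where "run k B = C" unfolding reach_def by blast
  then have "run (Suc k) A = C" using \<open>step A = B\<close> by (simp only: run_Suc)
  then show ?thesis unfolding reach_def by blast
qed
lemma reach_trans: "reach A B \<Longrightarrow> reach B C \<Longrightarrow> reach A C"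
proof -
  assume "reach A B" "reach B C"
  then obtain k1 k2 where "run k1 A = B" "run k2 B = C" unfolding reach_def by blast
  then have "run (k1 + k2) A = C" by (simp only: run_add)
  then show ?thesis unfolding reach_def by blast
qed

lemma complete: "phi_rel e x y \<Longrightarrow> reach (Ev e x st) (Rt y st)"
proof (induction arbitrary: st rule: phi_rel.induct)
  case (pr_zero e x) then show ?case by (intro reach_step[OF _ reach_refl]) (simp add: stepE_def)
next
  case (pr_succ e x) then show ?case by (intro reach_step[OF _ reach_refl]) (simp add: stepE_def)
next
  case (pr_fst e x) then show ?case by (intro reach_step[OF _ reach_refl]) (simp add: stepE_def p1_def)
next
  case (pr_snd e x) then show ?case by (intro reach_step[OF _ reach_refl]) (simp add: stepE_def p2_def)
next
  case (pr_comp e a b x y z)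
  have ab: "p1 (e div 8) = a" "p2 (e div 8) = b" using pr_comp(2) by (simp_all add: p1_def p2_def)
  have s1: "step (Ev e x st) = Ev b x (cns (pe 0 a) st)" using pr_comp(1) ab by (simp add: stepE_def)
  have s2: "step (Rt y (cns (pe 0 a) st)) = Ev a y st" by (simp add: stepR_cns)
  show ?case by (rule reach_step[OF s1 reach_trans[OF pr_comp.IH(1) reach_step[OF s2 pr_comp.IH(2)]]])
next
  case (pr_pair e a b x y z)
  have ab: "p1 (e div 8) = a" "p2 (e div 8) = b" using pr_pair(2) by (simp_all add: p1_def p2_def)
  have s1: "step (Ev e x st) = Ev a x (cns (pe 1 (pe b x)) st)" using pr_pair(1) ab by (simp add: stepE_def)
  have s2: "step (Rt y (cns (pe 1 (pe b x)) st)) = Ev b x (cns (pe 2 y) st)" by (simp add: stepR_cns)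
  have s3: "step (Rt z (cns (pe 2 y) st)) = Rt (pe y z) st" by (simp add: stepR_cns)
  show ?case by (rule reach_step[OF s1 reach_trans[OF pr_pair.IH(1) reach_step[OF s2 reach_trans[OF pr_pair.IH(2) reach_step[OF s3[unfolded pe_def[of y z]] reach_refl]]]]])
next
  case (pr_rec0 e a b x u y)
  have ab: "p1 (e div 8) = a" "p2 (e div 8) = b" using pr_rec0(2) by (simp_all add: p1_def p2_def)
  have x: "x = pe u 0" using pr_rec0(3) decode_eq_pe by blast
  have s1: "step (Ev e x st) = Ev a u st" using pr_rec0(1) ab x by (simp add: stepE_def)
  show ?case by (rule reach_step[OF s1 pr_rec0.IH])
next
  case (pr_recS e a b x u n w y)
  have ab: "p1 (e div 8) = a" "p2 (e div 8) = b" using pr_recS(2) by (simp_all add: p1_def p2_def)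
  have x: "x = pe u (Suc n)" using pr_recS(3) decode_eq_pe by blast
  have s1: "step (Ev e x st) = Ev e (pe u n) (cns (pe 3 (pe b (pe u n))) st)" using pr_recS(1) ab x by (simp add: stepE_def)
  have s2: "step (Rt w (cns (pe 3 (pe b (pe u n))) st)) = Ev b (pe u (pe n w)) st" by (simp add: stepR_cns)
  show ?case by (rule reach_step[OF s1 reach_trans[OF pr_recS.IH(1)[unfolded pe_def[symmetric]] reach_step[OF s2 pr_recS.IH(2)[unfolded pe_def[symmetric]]]]])
next
  case (pr_mu e x n)
  let ?d = "e div 8"
  let ?F = "\<lambda>m. cns (pe 4 (pe e (pe x m))) st"
  have loop: "m \<le> n \<Longrightarrow> reach (Ev ?d (pe x 0) (?F 0)) (Ev ?d (pe x m) (?F m))" for m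
  proof (induction m)
    case 0 show ?case by (rule reach_refl)
  next
    case (Suc m)
    then have k: "reach (Ev ?d (pe x 0) (?F 0)) (Ev ?d (pe x m) (?F m))" by auto
    have "m < n" using Suc.prems by simp
    with pr_mu.IH(2) obtain j where "\<forall>st. reach (Ev ?d (prod_encode (x, m)) st) (Rt (Suc j) st)" by blast
    then have k2: "reach (Ev ?d (pe x m) (?F m)) (Rt (Suc j) (?F m))" unfolding pe_def by blast
    have s: "step (Rt (Suc j) (?F m)) = Ev ?d (pe x (Suc m)) (?F (Suc m))" using pr_mu(1) by (simp add: stepR_cns)
    show ?case by (rule reach_trans[OF k reach_trans[OF k2 reach_step[OF s reach_refl]]])
  qed
  have s1: "step (Ev e x st) = Ev ?d (pe x 0) (?F 0)" using pr_mu(1) by (simp add: stepE_def)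
  have k2: "reach (Ev ?d (pe x n) (?F n)) (Rt 0 (?F n))" using pr_mu.IH(1) unfolding pe_def by blast
  have s2: "step (Rt 0 (?F n)) = Rt n st" by (simp add: stepR_cns)
  have l: "reach (Ev ?d (pe x 0) (?F 0)) (Ev ?d (pe x n) (?F n))" by (rule loop) simp
  have r2: "reach (Rt 0 (?F n)) (Rt n st)" by (rule reach_step[OF s2 reach_refl])
  have r3: "reach (Ev ?d (pe x n) (?F n)) (Rt n st)" by (rule reach_trans[OF k2 r2])
  have r4: "reach (Ev ?d (pe x 0) (?F 0)) (Rt n st)" by (rule reach_trans[OF l r3])
  show ?case by (rule reach_step[OF s1 r4])
qed

definition fsem :: "nat \<Rightarrow> nat \<Rightarrow> nat \<Rightarrow> bool" where
"fsem F v r = (if p1 F = 0 then phi_rel (p2 F) v r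
  else if p1 F = 1 then (\<exists>z. phi_rel (p1 (p2 F)) (p2 (p2 F)) z \<and> r = pe v z)
  else if p1 F = 2 then r = pe (p2 F) v
  else if p1 F = 3 then phi_rel (p1 (p2 F)) (pe (p1 (p2 (p2 F))) (pe (p2 (p2 (p2 F))) v)) r
  else (p1 (p2 F) mod 8 = 7 \<longrightarrow>
        (\<forall>m'<p2 (p2 (p2 F)). \<exists>k. phi_rel (p1 (p2 F) div 8) (pe (p1 (p2 (p2 F))) m') (Suc k)) \<longrightarrow>
        phi_rel (p1 (p2 F) div 8) (pe (p1 (p2 (p2 F))) (p2 (p2 (p2 F)))) v \<longrightarrow>
        phi_rel (p1 (p2 F)) (p1 (p2 (p2 F))) r))"

inductive srel :: "nat \<Rightarrow> nat \<Rightarrow> nat \<Rightarrow> bool" where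
  srel_nil: "srel 0 v v"
| srel_cons: "fsem F v r' \<Longrightarrow> srel s r' r \<Longrightarrow> srel (cns F s) v r"

lemma srel_0[simp]: "srel 0 v r \<longleftrightarrow> v = r"
  by (auto elim: srel.cases intro: srel_nil)
lemma srel_cns[simp]: "srel (cns F s) v r \<longleftrightarrow> (\<exists>r'. fsem F v r' \<and> srel s r' r)"
proof
  assume "srel (cns F s) v r" then show "\<exists>r'. fsem F v r' \<and> srel s r' r"
    by (cases rule: srel.cases) auto
qed (auto intro: srel_cons)

definition good :: "nat \<Rightarrow> nat \<Rightarrow> bool" where
"good Q r = (if p1 Q = 0 then (\<exists>v. phi_rel (p1 (p2 Q)) (p1 (p2 (p2 Q))) v \<and> srel (p2 (p2 (p2 Q))) v r)
            else srel (p2 (p2 Q)) (p1 (p2 Q)) r)"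

lemma good_Ev[simp]: "good (Ev e x st) r \<longleftrightarrow> (\<exists>v. phi_rel e x v \<and> srel st v r)"
  by (simp add: good_def)
lemma good_Rt[simp]: "good (Rt v st) r \<longleftrightarrow> srel st v r"
  by (simp add: good_def)

lemma phi_comp': "e mod 8 = 4 \<Longrightarrow> phi_rel (p2 (e div 8)) x y \<Longrightarrow> phi_rel (p1 (e div 8)) y z \<Longrightarrow> phi_rel e x z"
  by (rule pr_comp) (auto simp: decode_p)
lemma phi_pair': "e mod 8 = 5 \<Longrightarrow> phi_rel (p1 (e div 8)) x y \<Longrightarrow> phi_rel (p2 (e div 8)) x z \<Longrightarrow> phi_rel e x (pe y z)"
  unfolding pe_def by (rule pr_pair) (auto simp: decode_p)
lemma phi_rec0': "e mod 8 = 6 \<Longrightarrow> p2 x = 0 \<Longrightarrow> phi_rel (p1 (e div 8)) (p1 x) y \<Longrightarrow> phi_rel e x y"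
  by (rule pr_rec0) (auto simp: decode_p)
lemma phi_recS': "e mod 8 = 6 \<Longrightarrow> p2 x = Suc n \<Longrightarrow> phi_rel e (pe (p1 x) n) w \<Longrightarrow>
   phi_rel (p2 (e div 8)) (pe (p1 x) (pe n w)) y \<Longrightarrow> phi_rel e x y"
  by (rule pr_recS[where u="p1 x" and n=n and w=w]) (auto simp: decode_p pe_def)
lemma phi_mu': "e mod 8 = 7 \<Longrightarrow> phi_rel (e div 8) (pe x n) 0 \<Longrightarrow>
   (\<forall>m<n. \<exists>k. phi_rel (e div 8) (pe x m) (Suc k)) \<Longrightarrow> phi_rel e x n"
  unfolding pe_def by (rule pr_mu)

lemma mod8_split:
  assumes "(e::nat) mod 8 = 0 \<Longrightarrow> P" "e mod 8 = 1 \<Longrightarrow> P" "e mod 8 = 2 \<Longrightarrow> P" "e mod 8 = 3 \<Longrightarrow> P"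
    "e mod 8 = 4 \<Longrightarrow> P" "e mod 8 = 5 \<Longrightarrow> P" "e mod 8 = 6 \<Longrightarrow> P" "e mod 8 = 7 \<Longrightarrow> P"
  shows P
proof -
  obtain k where k: "k = e mod 8" by blast
  have "k < 8" using k by simp
  then have "k = 0 \<or> k = 1 \<or> k = 2 \<or> k = 3 \<or> k = 4 \<or> k = 5 \<or> k = 6 \<or> k = 7" by linarith
  then show P unfolding k by (elim disjE) (erule assms)+
qed

lemma goodE: "good (stepE e x st) r \<Longrightarrow> \<exists>v. phi_rel e x v \<and> srel st v r"
proof (rule mod8_split[of e])
  assume g: "good (stepE e x st) r"
  { assume c: "e mod 8 = 0"
    have "phi_rel e x 0" by (rule pr_zero[OF c])
    then show ?thesis using g c by (auto simp: stepE_def) }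
  { assume c: "e mod 8 = 1"
    have "phi_rel e x (Suc x)" by (rule pr_succ[OF c])
    then show ?thesis using g c by (auto simp: stepE_def) }
  { assume c: "e mod 8 = 2"
    have "phi_rel e x (p1 x)" unfolding p1_def by (rule pr_fst[OF c])
    then show ?thesis using g c by (auto simp: stepE_def) }
  { assume c: "e mod 8 = 3"
    have "phi_rel e x (p2 x)" unfolding p2_def by (rule pr_snd[OF c])
    then show ?thesis using g c by (auto simp: stepE_def) }
  { assume c: "e mod 8 = 4"
    then show ?thesis using g by (auto simp: stepE_def fsem_def intro: phi_comp') }
  { assume c: "e mod 8 = 5"
    then show ?thesis using g by (auto simp: stepE_def fsem_def intro: phi_pair') }
  { assume c: "e mod 8 = 6"
    show ?thesis
    proof (cases "p2 x")
      case 0 then show ?thesis using g c by (auto simp: stepE_def intro: phi_rec0')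
    next
      case (Suc n)
      then obtain w where w: "phi_rel e (pe (p1 x) n) w" "srel (cns (pe 3 (pe (p2 (e div 8)) (pe (p1 x) n))) st) w r"
        using g c by (auto simp: stepE_def)
      then obtain y where y: "phi_rel (p2 (e div 8)) (pe (p1 x) (pe n w)) y" "srel st y r"
        by (auto simp: fsem_def)
      show ?thesis using phi_recS'[OF c Suc w(1) y(1)] y(2) by blast
    qed }
  { assume c: "e mod 8 = 7"
    then obtain v where v: "phi_rel (e div 8) (pe x 0) v" "srel (cns (pe 4 (pe e (pe x 0))) st) v r"
      using g by (auto simp: stepE_def)
    then obtain r' where "fsem (pe 4 (pe e (pe x 0))) v r'" "srel st r' r" by auto
    then show ?thesis using c v(1) by (auto simp: fsem_def) }
qed

lemma cns_p: "st \<noteq> 0 \<Longrightarrow> st = cns (p1 (st - 1)) (p2 (st - 1))"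
  by simp

lemma goodR: "good (stepR v st) r \<Longrightarrow> srel st v r"
proof (cases "st = 0")
  case True
  assume "good (stepR v st) r" then show ?thesis using True by (simp add: stepR_def)
next
  case False
  assume g: "good (stepR v st) r"
  define F where "F = p1 (st - 1)"
  define s where "s = p2 (st - 1)"
  have st: "st = cns F s" using False unfolding F_def s_def by simp
  have g': "good (stepR v (cns F s)) r" using g st by simp
  have "p1 F = 0 \<or> p1 F = 1 \<or> p1 F = 2 \<or> p1 F = 3 \<or> p1 F > 3" by linarith
  moreover {
    assume c: "p1 F = 0"
    then have ?thesis using g' unfolding st by (simp add: stepR_cns fsem_def)
  } moreover {
    assume c: "p1 F = 1"
    then have ?thesis using g' unfolding st by (auto simp: stepR_cns fsem_def)
  } moreover {
    assume c: "p1 F = 2"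
    then have ?thesis using g' unfolding st by (simp add: stepR_cns fsem_def)
  } moreover {
    assume c: "p1 F = 3"
    then have ?thesis using g' unfolding st by (simp add: stepR_cns fsem_def)
  } moreover {
    assume c: "p1 F > 3"
    obtain t e y m where F: "F = pe t (pe e (pe y m))" by (metis pe_p)
    have t: "t > 3" using c F by simp
    have ?thesis
    proof (cases "v = 0")
      case True
      then have "srel s m r" using g' t unfolding F by (simp add: stepR_cns)
      moreover have "fsem F v m" using True t unfolding F fsem_def by (auto intro: phi_mu')
      ultimately show ?thesis unfolding st by auto
    next
      case False
      then obtain v' r' where v': "phi_rel (e div 8) (pe y (Suc m)) v'"
        "fsem (pe 4 (pe e (pe y (Suc m)))) v' r'" "srel s r' r"
        using g' t unfolding F by (auto simp: stepR_cns)
      have "fsem F v r'" unfolding F fsem_def using t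
      proof (simp, intro impI)
        assume m7: "e mod 8 = 7" and lt: "\<forall>m'<m. \<exists>k. phi_rel (e div 8) (pe y m') (Suc k)"
          and pv: "phi_rel (e div 8) (pe y m) v"
        have "\<forall>m'<Suc m. \<exists>k. phi_rel (e div 8) (pe y m') (Suc k)"
          using lt pv False by (metis less_Suc_eq not0_implies_Suc)
        then show "phi_rel e y r'" using v'(1,2) m7 by (simp add: fsem_def)
      qed
      then show ?thesis unfolding st using v'(3) by auto
    qed
  }
  ultimately show ?thesis by blast
qed

lemma good_step: "good (step Q) r \<Longrightarrow> good Q r"
proof (cases "p1 Q = 0")
  case True
  assume g: "good (step Q) r"
  obtain a b c where Q: "Q = Ev a b c" using True by (metis pe_p)
  from g have "good (stepE a b c) r" unfolding Q by simp
  from goodE[OF this] show ?thesis unfolding Q by simp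
next
  case False
  assume g: "good (step Q) r"
  have "step Q = stepR (p1 (p2 Q)) (p2 (p2 Q))" using False by (simp add: step_def)
  with g have "srel (p2 (p2 Q)) (p1 (p2 Q)) r" using goodR by simp
  then show ?thesis using False by (simp add: good_def)
qed

lemma sound: "run k Q = Rt r 0 \<Longrightarrow> good Q r"
proof (induction k arbitrary: Q)
  case 0 then show ?case by simp
next
  case (Suc k) then show ?case by (simp add: run_Suc good_step)
qed

definition halted :: "nat \<Rightarrow> bool" where "halted Q \<longleftrightarrow> p1 Q \<noteq> 0 \<and> p2 (p2 Q) = 0"

lemma halted_step: "halted Q \<Longrightarrow> step Q = Rt (p1 (p2 Q)) 0"
  by (simp add: halted_def step_def stepR_def)

lemma halted_Rt: "halted (Rt v 0)" by (simp add: halted_def)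

lemma run_fix: "run k (Rt v 0) = Rt v 0"
  by (induction k) (simp_all add: run_Suc stepR_def)

lemma halted_run_mono: "halted (run k Q) \<Longrightarrow> k \<le> k' \<Longrightarrow> halted (run k' Q)"
proof -
  assume h: "halted (run k Q)" and kk: "k \<le> k'"
  obtain j where j: "k' = k + j" using kk le_Suc_ex by blast
  show ?thesis
  proof (cases j)
    case 0 then show ?thesis using h j by simp
  next
    case (Suc i)
    have "run k' Q = run i (step (run k Q))" unfolding j Suc by (simp only: run_add run_Suc)
    also have "\<dots> = Rt (p1 (p2 (run k Q))) 0" using halted_step[OF h] run_fix by simp
    finally show ?thesis by (simp add: halted_Rt)
  qed
qed

lemma W_run: "x \<in> W e \<longleftrightarrow> (\<exists>k. halted (run k (Ev e x 0)))"
proof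
  assume "x \<in> W e"
  then obtain y where "phi_rel e x y" unfolding W_def by blast
  from complete[OF this, of 0] obtain k where "run k (Ev e x 0) = Rt y 0" unfolding reach_def by blast
  then show "\<exists>k. halted (run k (Ev e x 0))" using halted_Rt by metis
next
  assume "\<exists>k. halted (run k (Ev e x 0))"
  then obtain k where h: "halted (run k (Ev e x 0))" by blast
  have "run (k + 1) (Ev e x 0) = run 1 (run k (Ev e x 0))" by (rule run_add)
  also have "\<dots> = step (run k (Ev e x 0))" by (simp add: run_Suc)
  also have "\<dots> = Rt (p1 (p2 (run k (Ev e x 0)))) 0" by (rule halted_step[OF h])
  finally have "run (k + 1) (Ev e x 0) = Rt (p1 (p2 (run k (Ev e x 0)))) 0" .
  from sound[OF this] show "x \<in> W e" unfolding W_def by auto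
qed

lemma phi_det: "phi_rel e x y \<Longrightarrow> phi_rel e x y' \<Longrightarrow> y = y'"
proof -
  assume a: "phi_rel e x y" "phi_rel e x y'"
  obtain k where k: "run k (Ev e x 0) = Rt y 0" using complete[OF a(1), of 0] unfolding reach_def by blast
  obtain k' where k': "run k' (Ev e x 0) = Rt y' 0" using complete[OF a(2), of 0] unfolding reach_def by blast
  have "run (k + k') (Ev e x 0) = Rt y 0" using k by (simp add: run_add run_fix)
  moreover have "run (k + k') (Ev e x 0) = Rt y' 0" using k' by (simp add: run_add[of k' k, simplified add.commute] run_fix add.commute)
  ultimately show "y = y'" by simp
qed

lemma prim_stepE[pi]: assumes a: "prim f" "prim g" "prim h"
  shows "prim (\<lambda>x. stepE (f x) (g x) (h x))"
  unfolding stepE_def apply (intro pi a) done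

lemma prim_stepR[pi]: assumes a: "prim f" "prim g"
  shows "prim (\<lambda>x. stepR (f x) (g x))"
  unfolding stepR_def apply (intro pi a) done

lemma prim_step[pi]: assumes a: "prim f" shows "prim (\<lambda>x. step (f x))"
  unfolding step_def apply (intro pi a) done

lemma run_rec: "run k Q = rec_nat Q (\<lambda>_ w. step w) k"
  unfolding run_def by (induction k) auto

lemma prim_run[pi]: assumes a: "prim f" "prim g" shows "prim (\<lambda>x. run (f x) (g x))"
  unfolding run_rec apply (intro pi a) done

definition hb :: "nat \<Rightarrow> nat" where "hb Q = (if p1 Q = 0 then 1 else if p2 (p2 Q) = 0 then 0 else 1)"

lemma hb_halted: "hb Q = 0 \<longleftrightarrow> halted Q" by (simp add: hb_def halted_def)

lemma prim_hb[pi]: assumes a: "prim f" shows "prim (\<lambda>x. hb (f x))"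
  unfolding hb_def apply (intro pi a) done

text \<open>hw s e x = 0 iff the computation of e on x halts within s steps\<close>
definition hw :: "nat \<Rightarrow> nat \<Rightarrow> nat \<Rightarrow> nat" where "hw s e x = hb (run s (Ev e x 0))"

lemma prim_hw[pi]: assumes a: "prim f" "prim g" "prim h" shows "prim (\<lambda>x. hw (f x) (g x) (h x))"
  unfolding hw_def apply (intro pi a) done

lemma W_hw: "x \<in> W e \<longleftrightarrow> (\<exists>s. hw s e x = 0)"
  by (simp add: hw_def hb_halted W_run)

lemma hw_mono: "hw s e x = 0 \<Longrightarrow> s \<le> s' \<Longrightarrow> hw s' e x = 0"
  by (simp add: hw_def hb_halted halted_run_mono)

definition bsn :: "(nat \<Rightarrow> nat) \<Rightarrow> nat \<Rightarrow> nat" where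
"bsn P s = rec_nat (if P 0 = 0 then 1 else 0) (\<lambda>k r. if r = 0 then (if P (Suc k) = 0 then Suc (Suc k) else 0) else r) s"

lemma bsn_char: "bsn P s = (if \<exists>z\<le>s. P z = 0 then Suc (LEAST z. P z = 0) else 0)"
proof (induction s)
  case 0 then show ?case by (auto simp: bsn_def intro: Least_equality)
next
  case (Suc s)
  have r: "bsn P (Suc s) = (if bsn P s = 0 then (if P (Suc s) = 0 then Suc (Suc s) else 0) else bsn P s)"
    by (simp add: bsn_def)
  show ?case
  proof (cases "\<exists>z\<le>s. P z = 0")
    case True
    then have "\<exists>z\<le>Suc s. P z = 0" using le_SucI by blast
    then show ?thesis using Suc r True by auto
  next
    case False
    then have nz: "\<forall>z\<le>s. P z \<noteq> 0" by auto
    show ?thesis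
    proof (cases "P (Suc s) = 0")
      case True
      have "(LEAST z. P z = 0) = Suc s"
      proof (rule Least_equality)
        show "P (Suc s) = 0" by (rule True)
        fix y assume "P y = 0" then have "\<not> y \<le> s" using nz by blast
        then show "Suc s \<le> y" by simp
      qed
      then show ?thesis using Suc r False True by auto
    next
      case F: False
      have "\<not> (\<exists>z\<le>Suc s. P z = 0)"
      proof
        assume "\<exists>z\<le>Suc s. P z = 0"
        then obtain z where "z \<le> Suc s" "P z = 0" by blast
        then show False using nz F by (cases "z = Suc s") auto
      qed
      then show ?thesis using Suc r False F by auto
    qed
  qed
qed

lemma prim2_app: assumes "prim (\<lambda>p. P (p1 p) (p2 p))" "prim f" "prim g"
  shows "prim (\<lambda>x. P (f x) (g x))"
  using prim_comp[OF assms(1) prim_pe[OF assms(2,3)]] by simp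

lemma prim_bsn: assumes a: "prim (\<lambda>p. P (p1 p) (p2 p))" "prim n"
  shows "prim (\<lambda>x. bsn (P x) (n x))"
  unfolding bsn_def apply (intro pi a prim2_app[OF a(1)]) done

definition mstage :: "nat \<Rightarrow> nat \<Rightarrow> nat" where "mstage s e = bsn (\<lambda>z. hw s e z) s"

lemma prim_mstage[pi]: assumes a: "prim f" "prim g" shows "prim (\<lambda>x. mstage (f x) (g x))"
  unfolding mstage_def
  apply (rule prim_bsn[where P="\<lambda>x z. hw (f x) (g x) z"]; intro pi a prim_comp[OF a(1)] prim_comp[OF a(2)]) done

definition mtrue :: "nat \<Rightarrow> nat" where "mtrue e = (if W e = {} then 0 else Suc (Inf (W e)))"

lemma mstage_char: "mstage s e = (if \<exists>z\<le>s. hw s e z = 0 then Suc (LEAST z. hw s e z = 0) else 0)"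
  unfolding mstage_def by (rule bsn_char)

lemma mstage_conv: "\<exists>S. \<forall>s\<ge>S. mstage s e = mtrue e"
proof (cases "W e = {}")
  case True
  have n: "hw s e z \<noteq> 0" for s z
  proof
    assume "hw s e z = 0" then have "z \<in> W e" using W_hw by blast
    then show False using True by simp
  qed
  have "mstage s e = mtrue e" for s using n True by (simp add: mstage_char mtrue_def)
  then show ?thesis by blast
next
  case False
  define z0 where "z0 = Inf (W e)"
  have z0: "z0 \<in> W e" using False unfolding z0_def by (rule Inf_nat_def1)
  have zmin: "\<And>z. z \<in> W e \<Longrightarrow> z0 \<le> z" unfolding z0_def by (rule cInf_lower) simp_all
  obtain s0 where s0: "hw s0 e z0 = 0" using z0 unfolding W_hw by blast
  have "\<forall>s\<ge>max s0 z0. mstage s e = mtrue e"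
  proof (intro allI impI)
    fix s assume s: "max s0 z0 \<le> s"
    have h: "hw s e z0 = 0" using hw_mono[OF s0] s by simp
    have "(LEAST z. hw s e z = 0) = z0"
    proof (rule Least_equality)
      show "hw s e z0 = 0" by (rule h)
      fix y assume "hw s e y = 0"
      then have "y \<in> W e" unfolding W_hw by blast
      then show "z0 \<le> y" by (rule zmin)
    qed
    moreover have "\<exists>z\<le>s. hw s e z = 0" using h s by auto
    ultimately show "mstage s e = mtrue e" using False by (simp add: mstage_char mtrue_def z0_def)
  qed
  then show ?thesis by blast
qed

lemma Emin_mtrue: "E_min i j \<longleftrightarrow> mtrue i = mtrue j"
  unfolding E_min_def minW_def mtrue_def by auto

lemma mod87: "(7 + 8 * c) mod 8 = (7::nat)" "(7 + 8 * c) div 8 = (c::nat)" by simp_all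

lemma phi_mu_inv0: assumes "phi_rel e z y" "e mod 8 = 7" shows "phi_rel (e div 8) (pe z y) 0"
  using assms proof (cases rule: phi_rel.cases)
qed (simp_all add: pe_def)

lemma phi_mu_inv: assumes "phi_rel (7 + 8 * c) z y" shows "phi_rel c (pe z y) 0"
  using phi_mu_inv0[OF assms mod87(1)] mod87(2) by simp

lemma W_mu: assumes g: "\<forall>p. phi_rel c p (g p)"
  shows "W (7 + 8 * c) = {z. \<exists>s. g (pe z s) = 0}"
proof (intro set_eqI iffI)
  fix z assume "z \<in> W (7 + 8 * c)"
  then obtain y where "phi_rel (7 + 8 * c) z y" unfolding W_def by blast
  then have "phi_rel c (pe z y) 0" by (rule phi_mu_inv)
  then have "g (pe z y) = 0" using g phi_det by blast
  then show "z \<in> {z. \<exists>s. g (pe z s) = 0}" by blast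
next
  fix z assume "z \<in> {z. \<exists>s. g (pe z s) = 0}"
  then obtain s where s: "g (pe z s) = 0" by blast
  define s0 where "s0 = (LEAST s. g (pe z s) = 0)"
  have s0: "g (pe z s0) = 0" unfolding s0_def using s by (rule LeastI)
  have lt: "\<forall>m<s0. \<exists>k. phi_rel c (pe z m) (Suc k)"
  proof (intro allI impI)
    fix m assume "m < s0"
    then have "g (pe z m) \<noteq> 0" unfolding s0_def using not_less_Least by blast
    then obtain k where "g (pe z m) = Suc k" using not0_implies_Suc by blast
    then show "\<exists>k. phi_rel c (pe z m) (Suc k)" using g by metis
  qed
  have "phi_rel (7 + 8 * c) z s0"
    by (rule phi_mu') (use g[rule_format, of "pe z s0"] s0 lt in \<open>simp_all add: mod87\<close>)
  then show "z \<in> W (7 + 8 * c)" unfolding W_def by blast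
qed

definition cidx :: "nat \<Rightarrow> nat" where "cidx c = cd (constT c)"

lemma cidx_phi: "phi_rel (cidx c) x c"
  unfolding cidx_def using cd_correct[of "constT c" x] by simp

lemma cidx_rec: "cidx n = rec_nat 0 (\<lambda>k w. 4 + 8 * pe 1 w) n"
  unfolding cidx_def by (induction n) auto

lemma prim_cidx[pi]: assumes a: "prim f" shows "prim (\<lambda>x. cidx (f x))"
  unfolding cidx_rec apply (intro pi a) done

lemma W_zero: "W 0 = UNIV"
  unfolding W_def using pr_zero[of 0] by auto

lemma phi_two: "phi_rel 2 p (p1 p)"
  unfolding p1_def by (rule pr_fst) simp

lemma Emax_univ: "E_max n 0 \<longleftrightarrow> infinite (W n)"
proof -
  have m0: "maxW 0 = \<infinity>" by (simp add: maxW_def W_zero)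
  show ?thesis unfolding E_max_def m0 maxW_def[of n] by auto
qed

lemma infinite_from: "(\<forall>s\<ge>S. s \<in> A) \<Longrightarrow> infinite (A::nat set)"
  unfolding infinite_nat_iff_unbounded_le by (metis le_cases)

lemma part1: "\<not> reduces_n 2 E_max E_min"
proof
  assume "reduces_n 2 E_max E_min"
  then obtain f ef where ef: "\<forall>xs. length xs = 2 \<longrightarrow> phi_rel ef (list_encode xs) (list_encode (f xs))"
    and fr: "\<forall>xs. length xs = 2 \<longrightarrow> length (f xs) = 2 \<and>
        (\<forall>i j. i < j \<and> j < 2 \<longrightarrow> (E_max (xs ! i) (xs ! j) \<longleftrightarrow> E_min (f xs ! i) (f xs ! j)))"
    unfolding reduces_n_def by blast
  define G where "G c s = (if mstage s (p1 (c - 1)) = mstage s (p1 (p2 (c - 1) - 1)) then 1 else (0::nat))" for c s :: nat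
  have "prim (\<lambda>p. G (p1 p) (p2 p))" unfolding G_def apply (intro pi) done
  then obtain gG where gG: "\<forall>p. phi_rel gG p (G (p1 p) (p2 p))" by (blast dest: prim_idx)
  have "prim (\<lambda>a. Suc (pe a 1))" apply (intro pi) done
  then obtain lt where lt: "\<forall>a. phi_rel lt a (Suc (pe a 1))" by (blast dest: prim_idx)
  define T where "T w = 7 + 8 * (4 + 8 * pe gG (5 + 8 * pe (4 + 8 * pe ef (4 + 8 * pe lt (4 + 8 * pe w (cidx w)))) 2))" for w
  have "prim (\<lambda>w. T w)" unfolding T_def apply (intro pi) done
  then obtain t where t: "\<forall>x. phi_rel t x (T x)" by (blast dest: prim_idx)
  define n where "n = T t"
  define c where "c = 4 + 8 * pe gG (5 + 8 * pe (4 + 8 * pe ef (4 + 8 * pe lt (4 + 8 * pe t (cidx t)))) 2)"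
  have nc: "n = 7 + 8 * c" by (simp add: n_def T_def c_def)
  define xs where "xs = [n, 0]"
  have lx: "length xs = 2" by (simp add: xs_def)
  have pe00: "prod_encode (0, 0) = 0" by (simp add: prod_encode_def)
  have enc: "list_encode xs = Suc (pe n 1)" by (simp add: xs_def pe_def pe00)
  obtain a b where fab: "f xs = [a, b]" using fr lx
    by (metis (no_types, lifting) length_0_conv length_Suc_conv numeral_2_eq_2)
  define code where "code = list_encode (f xs)"
  have codeph: "phi_rel ef (Suc (pe n 1)) code" using ef lx enc unfolding code_def by metis
  have ca: "p1 (code - 1) = a" "p1 (p2 (code - 1) - 1) = b"
    by (simp_all add: code_def fab pe_def[symmetric])
  have cphi: "phi_rel c p (G code (p1 p))" for p
  proof -
    have 1: "phi_rel (4 + 8 * pe t (cidx t)) p n"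
      unfolding n_def by (rule phi_comp[OF cidx_phi t[rule_format]])
    have 2: "phi_rel (4 + 8 * pe lt (4 + 8 * pe t (cidx t))) p (Suc (pe n 1))"
      by (rule phi_comp[OF 1 lt[rule_format]])
    have 3: "phi_rel (4 + 8 * pe ef (4 + 8 * pe lt (4 + 8 * pe t (cidx t)))) p code"
      by (rule phi_comp[OF 2 codeph])
    have 4: "phi_rel (5 + 8 * pe (4 + 8 * pe ef (4 + 8 * pe lt (4 + 8 * pe t (cidx t)))) 2) p (pe code (p1 p))"
      by (rule phi_pair[OF 3 phi_two])
    have 5: "phi_rel c p (G (p1 (pe code (p1 p))) (p2 (pe code (p1 p))))"
      unfolding c_def by (rule phi_comp[OF 4 gG[rule_format]])
    then show ?thesis by simp
  qed
  have Wn: "W n = {s. mstage s a \<noteq> mstage s b}"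
    unfolding nc W_mu[OF allI[OF cphi]] G_def ca by auto
  obtain Sa where Sa: "\<forall>s\<ge>Sa. mstage s a = mtrue a" using mstage_conv by blast
  obtain Sb where Sb: "\<forall>s\<ge>Sb. mstage s b = mtrue b" using mstage_conv by blast
  have key: "infinite (W n) \<longleftrightarrow> mtrue a \<noteq> mtrue b"
  proof
    assume inf: "infinite (W n)"
    show "mtrue a \<noteq> mtrue b"
    proof
      assume eq: "mtrue a = mtrue b"
      have "W n \<subseteq> {..<max Sa Sb}"
      proof
        fix s assume "s \<in> W n"
        then have "mstage s a \<noteq> mstage s b" using Wn by simp
        then show "s \<in> {..<max Sa Sb}" using Sa Sb eq by (metis lessThan_iff max.bounded_iff not_le)
      qed
      then show False using inf finite_subset by blast
    qed
  next
    assume ne: "mtrue a \<noteq> mtrue b"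
    have "\<forall>s\<ge>max Sa Sb. s \<in> W n" using Sa Sb ne Wn by auto
    then show "infinite (W n)" by (rule infinite_from)
  qed
  have "E_max (xs ! 0) (xs ! 1) \<longleftrightarrow> E_min (f xs ! 0) (f xs ! 1)" using fr lx by auto
  then have "E_max (xs ! 0) (xs ! 1) \<longleftrightarrow> E_min a b" by (simp add: fab)
  then have "E_max n 0 \<longleftrightarrow> E_min a b" by (simp add: xs_def)
  then show False using key Emax_univ Emin_mtrue by blast
qed

declare prim_bsn[pi]

definition ltl :: "nat \<Rightarrow> nat" where "ltl c = p2 (c - 1)"
definition lhd :: "nat \<Rightarrow> nat" where "lhd c = p1 (c - 1)"
definition ldrop :: "nat \<Rightarrow> nat \<Rightarrow> nat" where "ldrop L k = rec_nat L (\<lambda>_ w. ltl w) k"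
definition lnth :: "nat \<Rightarrow> nat \<Rightarrow> nat" where "lnth L k = lhd (ldrop L k)"
definition llen :: "nat \<Rightarrow> nat" where "llen L = bsn (\<lambda>k. ldrop L k) L - 1"
definition ms :: "nat \<Rightarrow> nat \<Rightarrow> nat \<Rightarrow> nat" where "ms L s k = mstage s (lnth L k)"
definition dchg :: "nat \<Rightarrow> nat \<Rightarrow> nat" where
  "dchg L s = bsn (\<lambda>k. if k < llen L then (if ms L s k = ms L (s - 1) k then 1 else 0) else 1) (llen L)"
definition chg :: "nat \<Rightarrow> nat \<Rightarrow> nat" where
  "chg L s = (if s = 0 then 0 else if dchg L s = 0 then 1 else 0)"
definition rep :: "nat \<Rightarrow> nat \<Rightarrow> nat \<Rightarrow> nat" where
  "rep L s i = bsn (\<lambda>k. if ms L s k = ms L s i then 0 else 1) i - 1"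
definition tag :: "nat \<Rightarrow> nat \<Rightarrow> nat \<Rightarrow> nat" where "tag L s i = s * llen L + rep L s i"
definition G2 :: "nat \<Rightarrow> nat" where
  "G2 q = (if chg (p1 (p1 q)) (p2 (p2 q)) = 0 then (if p1 (p2 q) = tag (p1 (p1 q)) (p2 (p2 q)) (p2 (p1 q)) then 0 else 1) else 1)"

lemma prim_ltl[pi]: "prim f \<Longrightarrow> prim (\<lambda>x. ltl (f x))" unfolding ltl_def apply (intro pi) apply assumption done
lemma prim_lhd[pi]: "prim f \<Longrightarrow> prim (\<lambda>x. lhd (f x))" unfolding lhd_def apply (intro pi) apply assumption done
lemma prim_ldrop[pi]: assumes a: "prim f" "prim g" shows "prim (\<lambda>x. ldrop (f x) (g x))"
  unfolding ldrop_def apply (intro pi a prim_comp[OF a(1)] prim_comp[OF a(2)]) done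
lemma prim_lnth[pi]: assumes a: "prim f" "prim g" shows "prim (\<lambda>x. lnth (f x) (g x))"
  unfolding lnth_def apply (intro pi a prim_comp[OF a(1)] prim_comp[OF a(2)]) done
lemma prim_llen[pi]: assumes a: "prim f" shows "prim (\<lambda>x. llen (f x))"
  unfolding llen_def apply (intro pi a prim_comp[OF a(1)]) done
lemma prim_ms[pi]: assumes a: "prim f" "prim g" "prim h" shows "prim (\<lambda>x. ms (f x) (g x) (h x))"
  unfolding ms_def apply (intro pi a prim_comp[OF a(1)] prim_comp[OF a(2)] prim_comp[OF a(3)]) done
lemma prim_dchg[pi]: assumes a: "prim f" "prim g" shows "prim (\<lambda>x. dchg (f x) (g x))"
  unfolding dchg_def apply (intro pi a prim_comp[OF a(1)] prim_comp[OF a(2)]) done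
lemma prim_chg[pi]: assumes a: "prim f" "prim g" shows "prim (\<lambda>x. chg (f x) (g x))"
  unfolding chg_def apply (intro pi a prim_comp[OF a(1)] prim_comp[OF a(2)]) done
lemma prim_rep[pi]: assumes a: "prim f" "prim g" "prim h" shows "prim (\<lambda>x. rep (f x) (g x) (h x))"
  unfolding rep_def apply (intro pi a prim_comp[OF a(1)] prim_comp[OF a(2)] prim_comp[OF a(3)]) done
lemma prim_tag[pi]: assumes a: "prim f" "prim g" "prim h" shows "prim (\<lambda>x. tag (f x) (g x) (h x))"
  unfolding tag_def apply (intro pi a prim_comp[OF a(1)] prim_comp[OF a(2)] prim_comp[OF a(3)]) done
lemma prim_G2: "prim G2"
  unfolding G2_def apply (intro pi) done

lemma list_encode_Cons: "list_encode (x # xs) = Suc (pe x (list_encode xs))"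
  by (simp add: pe_def)

lemma ltl_enc: "ltl (list_encode ys) = list_encode (tl ys)"
proof (cases ys)
  case Nil
  have e: "prod_encode (0, 0) = 0" by (simp add: prod_encode_def)
  have "prod_decode 0 = (0, 0)" using prod_encode_inverse[of "(0, 0)"] unfolding e .
  then show ?thesis using Nil by (simp add: ltl_def p2_def)
next
  case (Cons a l) then show ?thesis by (simp add: ltl_def pe_def[symmetric])
qed

lemma ldrop_enc: "ldrop (list_encode xs) k = list_encode (drop k xs)"
  by (induction k) (simp_all add: ldrop_def ltl_enc drop_Suc tl_drop)

lemma lnth_enc: "k < length xs \<Longrightarrow> lnth (list_encode xs) k = xs ! k"
proof -
  assume k: "k < length xs"
  then obtain l where "drop k xs = xs ! k # l" by (metis Cons_nth_drop_Suc)
  then show ?thesis by (simp add: lnth_def ldrop_enc lhd_def pe_def[symmetric])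
qed

lemma enc0: "list_encode ys = 0 \<longleftrightarrow> ys = []"
  by (cases ys) auto

lemma len_le_enc: "length xs \<le> list_encode xs"
proof (induction xs)
  case Nil then show ?case by simp
next
  case (Cons a xs)
  have "list_encode xs \<le> pe a (list_encode xs)" by (rule pe_ge2)
  then show ?case using Cons by (simp add: pe_def[symmetric])
qed

lemma llen_enc: "llen (list_encode xs) = length xs"
proof -
  have ex: "\<exists>z\<le>list_encode xs. ldrop (list_encode xs) z = 0"
    using len_le_enc[of xs] by (intro exI[of _ "length xs"]) (simp add: ldrop_enc enc0)
  have "(LEAST z. ldrop (list_encode xs) z = 0) = length xs"
    by (rule Least_equality) (simp_all add: ldrop_enc enc0)
  then show ?thesis unfolding llen_def bsn_char using ex by simp
qed

lemma bld: "k \<le> n \<Longrightarrow> rec_nat 0 (\<lambda>j w. Suc (pe (Y (n - Suc j)) w)) k = list_encode (map Y [n - k..<n])"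
proof (induction k)
  case 0 then show ?case by simp
next
  case (Suc k)
  have "[n - Suc k..<n] = (n - Suc k) # [n - k..<n]"
    using Suc.prems by (simp add: upt_conv_Cons Suc_diff_Suc)
  then show ?case using Suc by (simp add: pe_def[symmetric])
qed

lemma ex_bound: "(\<forall>k<(n::nat). \<exists>S::nat. \<forall>s\<ge>S. Q k s) \<Longrightarrow> \<exists>S. \<forall>k<n. \<forall>s\<ge>S. Q k s"
proof (induction n)
  case 0 then show ?case by simp
next
  case (Suc n)
  then obtain S where S: "\<forall>k<n. \<forall>s\<ge>S. Q k s" by auto
  obtain S' where S': "\<forall>s\<ge>S'. Q n s" using Suc.prems by auto
  have "\<forall>k<Suc n. \<forall>s\<ge>max S S'. Q k s" using S S' less_Suc_eq by auto
  then show ?case by blast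
qed

definition idI :: nat where "idI = cd (Pr Fs Sn)"
lemma idI_phi: "phi_rel idI p p"
  using cd_correct[of "Pr Fs Sn" p] by (simp add: idI_def)

definition yi :: "nat \<Rightarrow> nat \<Rightarrow> nat \<Rightarrow> nat" where
  "yi g L i = 7 + 8 * (4 + 8 * pe g (5 + 8 * pe (cidx (pe L i)) idI))"

lemma W_yi: assumes g: "\<forall>p. phi_rel g p (G2 p)"
  shows "W (yi g L i) = {z. \<exists>s. chg L s = 0 \<and> z = tag L s i}"
proof -
  have c: "phi_rel (4 + 8 * pe g (5 + 8 * pe (cidx (pe L i)) idI)) p (G2 (pe (pe L i) p))" for p
    by (rule phi_comp[OF phi_pair[OF cidx_phi idI_phi] g[rule_format]])
  show ?thesis unfolding yi_def W_mu[OF allI[OF c]] by (auto simp: G2_def)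
qed

lemma rep_char: "rep L s k = (LEAST m. ms L s m = ms L s k)"
proof -
  have "\<exists>z\<le>k. (if ms L s z = ms L s k then 0 else 1::nat) = 0" by auto
  then show ?thesis unfolding rep_def bsn_char by (simp add: if_split_eq1)
qed

lemma rep_le: "rep L s k \<le> k"
  unfolding rep_char by (rule Least_le) simp

lemma rep_eq_iff: "rep L s i = rep L s j \<longleftrightarrow> ms L s i = ms L s j"
proof
  assume r: "rep L s i = rep L s j"
  have "ms L s (rep L s i) = ms L s i" unfolding rep_char by (rule LeastI[of _ i]) simp
  moreover have "ms L s (rep L s j) = ms L s j" unfolding rep_char by (rule LeastI[of _ j]) simp
  ultimately show "ms L s i = ms L s j" using r by simp
qed (simp add: rep_char)

lemma chg_char:
  assumes L: "L = list_encode xs" and n: "n = length xs"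
  shows "chg L s = 0 \<longleftrightarrow> s = 0 \<or> (\<exists>k<n. ms L s k \<noteq> ms L (s - 1) k)"
proof -
  have ll: "llen L = n" using L n llen_enc by simp
  have "dchg L s \<noteq> 0 \<longleftrightarrow> (\<exists>k<n. ms L s k \<noteq> ms L (s - 1) k)"
  proof -
    have "dchg L s \<noteq> 0 \<longleftrightarrow> (\<exists>z\<le>n. (if z < n then (if ms L s z = ms L (s - 1) z then 1 else 0) else 1::nat) = 0)"
      unfolding dchg_def ll bsn_char by simp
    also have "\<dots> \<longleftrightarrow> (\<exists>k<n. ms L s k \<noteq> ms L (s - 1) k)"
      by (auto split: if_splits)
    finally show ?thesis .
  qed
  then show ?thesis unfolding chg_def by auto
qed

lemma core:
  assumes L: "L = list_encode xs" and n: "n = length xs" and ne: "xs \<noteq> []"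
  shows "\<exists>s0. (\<forall>k<n. finite {z. \<exists>s. chg L s = 0 \<and> z = tag L s k} \<and>
                     {z. \<exists>s. chg L s = 0 \<and> z = tag L s k} \<noteq> {} \<and>
                     Max {z. \<exists>s. chg L s = 0 \<and> z = tag L s k} = tag L s0 k) \<and>
              (\<forall>k<n. ms L s0 k = mtrue (xs ! k))"
proof -
  have ll: "llen L = n" using L n llen_enc by simp
  have msx: "k < n \<Longrightarrow> ms L s k = mstage s (xs ! k)" for s k
    using L n lnth_enc by (simp add: ms_def)
  have "\<forall>k<n. \<exists>S. \<forall>s\<ge>S. ms L s k = mtrue (xs ! k)"
  proof (intro allI impI)
    fix k assume k: "k < n"
    obtain S where "\<forall>s\<ge>S. mstage s (xs ! k) = mtrue (xs ! k)" using mstage_conv by blast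
    then show "\<exists>S. \<forall>s\<ge>S. ms L s k = mtrue (xs ! k)" using msx[OF k] by auto
  qed
  from ex_bound[OF this] obtain S where S: "\<forall>k<n. \<forall>s\<ge>S. ms L s k = mtrue (xs ! k)" by blast
  define CS where "CS = {s. chg L s = 0}"
  have CSsub: "CS \<subseteq> {..S}"
  proof
    fix s assume "s \<in> CS"
    then have c: "s = 0 \<or> (\<exists>k<n. ms L s k \<noteq> ms L (s - 1) k)" unfolding CS_def using chg_char[OF L n] by blast
    show "s \<in> {..S}"
    proof (rule ccontr)
      assume "s \<notin> {..S}"
      then have "S < s" by simp
      then have "s \<noteq> 0" "\<forall>k<n. ms L s k = ms L (s - 1) k" using S by auto
      then show False using c by blast
    qed
  qed
  have finCS: "finite CS" using CSsub finite_subset by blast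
  have CS0: "0 \<in> CS" unfolding CS_def using chg_char[OF L n] by simp
  define s0 where "s0 = Max CS"
  have s0CS: "s0 \<in> CS" unfolding s0_def using finCS CS0 by (auto intro: Max_in)
  have les0: "s \<in> CS \<Longrightarrow> s \<le> s0" for s unfolding s0_def using finCS by simp
  have after: "\<forall>k<n. ms L (s0 + d) k = ms L s0 k" for d
  proof (induction d)
    case 0 then show ?case by simp
  next
    case (Suc d)
    have "s0 + Suc d \<notin> CS" using les0 by fastforce
    then have "\<forall>k<n. ms L (s0 + Suc d) k = ms L (s0 + d) k"
      unfolding CS_def using chg_char[OF L n, of "s0 + Suc d"] by auto
    then show ?case using Suc by simp
  qed
  have stab: "\<forall>k<n. ms L s0 k = mtrue (xs ! k)"
  proof (intro allI impI)
    fix k assume k: "k < n"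
    have "ms L (s0 + S) k = mtrue (xs ! k)" using S k by simp
    then show "ms L s0 k = mtrue (xs ! k)" using after k by metis
  qed
  have tagdef: "tag L s k = s * n + rep L s k" for s k unfolding tag_def ll by simp
  have sets: "{z. \<exists>s. chg L s = 0 \<and> z = tag L s k} = (\<lambda>s. tag L s k) ` CS" for k
    unfolding CS_def by auto
  have maxk: "Max ((\<lambda>s. tag L s k) ` CS) = tag L s0 k" if k: "k < n" for k
  proof (rule Max_eqI)
    show "finite ((\<lambda>s. tag L s k) ` CS)" using finCS by simp
    show "tag L s0 k \<in> (\<lambda>s. tag L s k) ` CS" using s0CS by simp
    fix z assume "z \<in> (\<lambda>s. tag L s k) ` CS"
    then obtain s where s: "s \<in> CS" "z = tag L s k" by blast
    have "s \<le> s0" using les0 s by simp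
    show "z \<le> tag L s0 k"
    proof (cases "s = s0")
      case True then show ?thesis using s by simp
    next
      case False
      then have "Suc s \<le> s0" using \<open>s \<le> s0\<close> by simp
      then have "Suc s * n \<le> s0 * n" by (rule mult_le_mono1)
      moreover have "rep L s k < n" using rep_le[of L s k] k by simp
      ultimately show ?thesis using s tagdef by simp
    qed
  qed
  have "\<forall>k<n. finite {z. \<exists>s. chg L s = 0 \<and> z = tag L s k} \<and>
                     {z. \<exists>s. chg L s = 0 \<and> z = tag L s k} \<noteq> {} \<and>
                     Max {z. \<exists>s. chg L s = 0 \<and> z = tag L s k} = tag L s0 k"
    unfolding sets using finCS CS0 maxk by auto
  then show ?thesis using stab by blast
qed

lemma prim_yi[pi]: assumes a: "prim f" "prim h" shows "prim (\<lambda>x. yi g (f x) (h x))"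
  unfolding yi_def apply (intro pi a) done

lemma part2: "reduces_fin E_min E_max"
proof -
  obtain g where g: "\<forall>p. phi_rel g p (G2 p)" using prim_idx[OF prim_G2] by blast
  define out where "out L = rec_nat 0 (\<lambda>j w. Suc (pe (yi g L (llen L - Suc j)) w)) (llen L)" for L
  have "prim (\<lambda>L. out L)" unfolding out_def apply (intro pi) done
  then obtain eo where eo: "\<forall>L. phi_rel eo L (out L)" using prim_idx by blast
  define f where "f xs = map (yi g (list_encode xs)) [0..<length xs]" for xs
  have outf: "out (list_encode xs) = list_encode (f xs)" for xs
    unfolding out_def f_def llen_enc using bld[of "length xs" "length xs" "yi g (list_encode xs)"] by simp
  have comp: "\<exists>e. \<forall>xs. xs \<noteq> [] \<longrightarrow> phi_rel e (list_encode xs) (list_encode (f xs))"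
    using eo outf by metis
  have corr: "length (f xs) = length xs \<and>
        (\<forall>i j. i < j \<and> j < length xs \<longrightarrow> (E_min (xs ! i) (xs ! j) \<longleftrightarrow> E_max (f xs ! i) (f xs ! j)))"
    if ne: "xs \<noteq> []" for xs
  proof -
    define L where "L = list_encode xs"
    define n where "n = length xs"
    obtain s0 where s0: "\<forall>k<n. finite {z. \<exists>s. chg L s = 0 \<and> z = tag L s k} \<and>
                     {z. \<exists>s. chg L s = 0 \<and> z = tag L s k} \<noteq> {} \<and>
                     Max {z. \<exists>s. chg L s = 0 \<and> z = tag L s k} = tag L s0 k"
       "\<forall>k<n. ms L s0 k = mtrue (xs ! k)"
      using core[OF L_def n_def ne] by blast
    have mx: "maxW (yi g L k) = ereal (real (tag L s0 k))" if k: "k < n" for k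
      using s0(1) k unfolding maxW_def W_yi[OF g] by auto
    have "E_min (xs ! i) (xs ! j) \<longleftrightarrow> E_max (f xs ! i) (f xs ! j)" if ij: "i < n" "j < n" for i j
    proof -
      have "E_max (f xs ! i) (f xs ! j) \<longleftrightarrow> tag L s0 i = tag L s0 j"
        using ij mx unfolding E_max_def f_def L_def n_def by simp
      also have "\<dots> \<longleftrightarrow> rep L s0 i = rep L s0 j" by (simp add: tag_def)
      also have "\<dots> \<longleftrightarrow> mtrue (xs ! i) = mtrue (xs ! j)" using rep_eq_iff s0(2) ij by simp
      also have "\<dots> \<longleftrightarrow> E_min (xs ! i) (xs ! j)" by (simp add: Emin_mtrue)
      finally show ?thesis by simp
    qed
    then show ?thesis unfolding n_def by (auto simp: f_def)
  qed
  show ?thesis unfolding reduces_fin_def using comp corr by blast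
qed

theorem proposition4p1:
  shows "\<not> reduces_n 2 E_max E_min \<and> reduces_fin E_min E_max"
  using part1 part2 by blast

end
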